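(* Let $f:2^V\to\mathbb{R}_+$ be a nonnegative supermodular function that is $r$-decomposable (not necessarily monotone), and let $k$ be an integer with $r<k\le n-1$. Run the following algorithm: $S_n\gets V$; for $i=n,\dots,k+1$, choose $v_i\in\arg\min_{v\in S_i}f(v\mid S_i\setminus\{v\})$ and set $S_{i-1}\gets S_i\setminus\{v_i\}$; output whichever of $S_k$ and $\emptyset$ has the larger function value. This algorithm achieves an approximation ratio of $O(n^{r-1}/k^{r-1})$ for the $\underline{k}$SPM problem on $f$.
   Context: $V$ is a finite set with $n=|V|$; $f(v\mid S)=f(S\cup\{v\})-f(S)$. Supermodular: $f(A)+f(B)\le f(A\cup B)+f(A\cap B)$. $f$ is $r$-decomposable if there exist $V_1,\dots,V_m\subseteq V$ with $|V_i|\le r$ and nonnegative supermodular $f_i:2^{V_i}\to\mathbb{R}_+$ with $f(S)=\sum_i f_i(S\cap V_i)$ for all $S$. The $\underline{k}$SPM problem asks for $S\subseteq V$ with $|S|\le k$ maximizing $f(S)$; approximation ratio $\rho$ means $\mathrm{OPT}\le\rho f(\text{output})$, constants in $O(\cdot)$ depending only on $r$. *)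

theory Defs
  imports Complex_Main
begin

text \<open>Set functions are modelled as total functions on sets; only their values on
subsets of the ground set matter.\<close>

definition supermodular_on :: "'a set \<Rightarrow> ('a set \<Rightarrow> real) \<Rightarrow> bool" where
  "supermodular_on V f \<longleftrightarrow>
     (\<forall>A B. A \<subseteq> V \<longrightarrow> B \<subseteq> V \<longrightarrow> f A + f B \<le> f (A \<union> B) + f (A \<inter> B))"

definition nonneg_on :: "'a set \<Rightarrow> ('a set \<Rightarrow> real) \<Rightarrow> bool" where
  "nonneg_on V f \<longleftrightarrow> (\<forall>A. A \<subseteq> V \<longrightarrow> 0 \<le> f A)"

definition decomposable :: "nat \<Rightarrow> 'a set \<Rightarrow> ('a set \<Rightarrow> real) \<Rightarrow> bool" where
  "decomposable r V f \<longleftrightarrow>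
     (\<exists>(m::nat) (Vs :: nat \<Rightarrow> 'a set) (fs :: nat \<Rightarrow> 'a set \<Rightarrow> real).
        (\<forall>i<m. Vs i \<subseteq> V \<and> card (Vs i) \<le> r \<and>
               nonneg_on (Vs i) (fs i) \<and> supermodular_on (Vs i) (fs i)) \<and>
        (\<forall>S. S \<subseteq> V \<longrightarrow> f S = (\<Sum>i<m. fs i (S \<inter> Vs i))))"

definition marginal :: "('a set \<Rightarrow> real) \<Rightarrow> 'a \<Rightarrow> 'a set \<Rightarrow> real" where
  "marginal f v S = f (S \<union> {v}) - f S"

definition greedy_run :: "'a set \<Rightarrow> ('a set \<Rightarrow> real) \<Rightarrow> nat \<Rightarrow> (nat \<Rightarrow> 'a set) \<Rightarrow> bool" where
  "greedy_run V f k S \<longleftrightarrow>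
     S (card V) = V \<and>
     (\<forall>i. k < i \<and> i \<le> card V \<longrightarrow>
        (\<exists>v\<in>S i. (\<forall>u\<in>S i. marginal f v (S i - {v}) \<le> marginal f u (S i - {u}))
                 \<and> S (i - 1) = S i - {v}))"

definition greedy_value :: "('a set \<Rightarrow> real) \<Rightarrow> nat \<Rightarrow> (nat \<Rightarrow> 'a set) \<Rightarrow> real" where
  "greedy_value f k S = max (f (S k)) (f {})"

end

theory Submission
  imports Defs
begin

lemma marg_sum:
  assumes fin: "finite V" and dec: "decomposable r V f" and TV: "T \<subseteq> V"
  shows "(\<Sum>v\<in>T. f T - f (T - {v})) \<le> real r * f T"
proof -
  obtain m :: nat and Vs fs where PE: "(\<forall>i<m. Vs i \<subseteq> V \<and> card (Vs i) \<le> r \<and>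
               nonneg_on (Vs i) (fs i) \<and> supermodular_on (Vs i) (fs i)) \<and>
        (\<forall>S. S \<subseteq> V \<longrightarrow> f S = (\<Sum>i<m. fs i (S \<inter> Vs i)))"
    using dec unfolding decomposable_def by blast
  have P: "\<forall>i<m. Vs i \<subseteq> V \<and> card (Vs i) \<le> r \<and>
               nonneg_on (Vs i) (fs i) \<and> supermodular_on (Vs i) (fs i)" using PE by (rule conjunct1)
  have E: "\<forall>S. S \<subseteq> V \<longrightarrow> f S = (\<Sum>i<m. fs i (S \<inter> Vs i))" using PE by (rule conjunct2)
  have "(\<Sum>v\<in>T. f T - f (T - {v})) = (\<Sum>v\<in>T. \<Sum>i<m. fs i (T \<inter> Vs i) - fs i ((T - {v}) \<inter> Vs i))"
  proof (rule sum.cong)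
    fix v assume "v \<in> T"
    have "f T = (\<Sum>i<m. fs i (T \<inter> Vs i))" using E TV by blast
    moreover have "f (T - {v}) = (\<Sum>i<m. fs i ((T - {v}) \<inter> Vs i))" using E TV by blast
    ultimately show "f T - f (T - {v}) = (\<Sum>i<m. fs i (T \<inter> Vs i) - fs i ((T - {v}) \<inter> Vs i))"
      by (simp add: sum_subtractf)
  qed simp
  also have "\<dots> = (\<Sum>i<m. \<Sum>v\<in>T. fs i (T \<inter> Vs i) - fs i ((T - {v}) \<inter> Vs i))"
    by (rule sum.swap)
  also have "\<dots> \<le> (\<Sum>i<m. real r * fs i (T \<inter> Vs i))"
  proof (rule sum_mono)
    fix i assume "i \<in> {..<m}"
    then have Pi: "Vs i \<subseteq> V" "card (Vs i) \<le> r" "nonneg_on (Vs i) (fs i)" using P by auto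
    have fV: "finite (Vs i)" using Pi(1) fin finite_subset by blast
    have nn: "0 \<le> fs i A" if "A \<subseteq> Vs i" for A using Pi(3) that unfolding nonneg_on_def by blast
    have "(\<Sum>v\<in>T. fs i (T \<inter> Vs i) - fs i ((T - {v}) \<inter> Vs i))
        \<le> (\<Sum>v\<in>T. if v \<in> Vs i then fs i (T \<inter> Vs i) else 0)"
    proof (rule sum_mono)
      fix v assume "v \<in> T"
      show "fs i (T \<inter> Vs i) - fs i ((T - {v}) \<inter> Vs i) \<le> (if v \<in> Vs i then fs i (T \<inter> Vs i) else 0)"
      proof (cases "v \<in> Vs i")
        case True
        have "0 \<le> fs i ((T - {v}) \<inter> Vs i)" by (rule nn) blast
        then show ?thesis using True by simp
      next
        case False
        then have "(T - {v}) \<inter> Vs i = T \<inter> Vs i" by blast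
        then show ?thesis using False by simp
      qed
    qed
    also have "\<dots> = (\<Sum>v\<in>T \<inter> Vs i. fs i (T \<inter> Vs i))"
      by (rule sum.inter_restrict[symmetric]) (use fin TV finite_subset in blast)
    also have "\<dots> = real (card (T \<inter> Vs i)) * fs i (T \<inter> Vs i)" by simp
    also have "\<dots> \<le> real r * fs i (T \<inter> Vs i)"
    proof (rule mult_right_mono)
      have "card (T \<inter> Vs i) \<le> card (Vs i)" by (rule card_mono[OF fV]) blast
      then show "real (card (T \<inter> Vs i)) \<le> real r" using Pi(2) by simp
      show "0 \<le> fs i (T \<inter> Vs i)" by (rule nn) blast
    qed
    finally show "(\<Sum>v\<in>T. fs i (T \<inter> Vs i) - fs i ((T - {v}) \<inter> Vs i)) \<le> real r * fs i (T \<inter> Vs i)" .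
  qed
  also have "\<dots> = real r * f T" using E TV by (simp add: sum_distrib_left)
  finally show ?thesis .
qed

lemma ff_step:
  fixes x :: real
  shows "(\<Prod>l<r. x - real l) * (x - real r) = x * (\<Prod>l<r. (x - 1) - real l)"
proof (induction r)
  case 0 then show ?case by simp
next
  case (Suc r)
  have "(\<Prod>l<Suc r. x - real l) * (x - real (Suc r)) = ((\<Prod>l<r. x - real l) * (x - real r)) * (x - real (Suc r))"
    by simp
  also have "\<dots> = x * (\<Prod>l<r. (x - 1) - real l) * ((x - 1) - real r)" using Suc by simp
  also have "\<dots> = x * (\<Prod>l<Suc r. (x - 1) - real l)" by simp
  finally show ?case .
qed

lemma ff_upper:
  fixes x :: real
  assumes "real r \<le> x"
  shows "(\<Prod>l<r. x - real l) \<le> x ^ r"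
proof -
  have "(\<Prod>l<r. x - real l) \<le> (\<Prod>l<r. x)"
    by (rule prod_mono) (use assms in auto)
  then show ?thesis by simp
qed

lemma ff_lower:
  assumes "r \<le> k" "1 \<le> r"
  shows "(real k / real r) ^ r \<le> (\<Prod>l<r. real k - real l)"
proof -
  have "(\<Prod>l<r. real k / real r) \<le> (\<Prod>l<r. real k - real l)"
  proof (rule prod_mono)
    fix l assume "l \<in> {..<r}"
    then have l: "l + 1 \<le> r" by simp
    have rp: "0 < real r" using assms by simp
    have "real k \<le> real r * (real k - real l)"
    proof -
      have "(real r - 1) * (real k - real r) \<ge> 0" using assms by simp
      moreover have "real l \<le> real r - 1" using l by simp
      then have "real r * real l \<le> real r * (real r - 1)" using rp by simp
      ultimately show ?thesis by (simp add: algebra_simps)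
    qed
    then have "real k / real r \<le> real k - real l" using rp by (simp add: divide_simps mult.commute)
    then show "0 \<le> real k / real r \<and> real k / real r \<le> real k - real l" by simp
  qed
  then show ?thesis by simp
qed

lemma find_switch:
  fixes n k :: nat
  assumes "P n" "\<not> P k" "k \<le> n"
  shows "\<exists>i. k < i \<and> i \<le> n \<and> P i \<and> \<not> P (i - 1)"
  using assms
proof (induction n)
  case 0 then show ?case by simp
next
  case (Suc n)
  show ?case
  proof (cases "P n")
    case True
    then have "k \<le> n" using Suc.prems by (metis le_SucE)
    then show ?thesis using Suc.IH True Suc.prems by (meson le_Suc_eq)
  next
    case False
    have "k \<noteq> Suc n" using Suc.prems by auto
    then have "k < Suc n" using Suc.prems by simp
    then show ?thesis using Suc.prems False by (intro exI[of _ "Suc n"]) simp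
  qed
qed


theorem corollary5:
  fixes r :: nat
  shows "\<exists>C::real. C > 0 \<and>
    (\<forall>(V::nat set) (f::nat set \<Rightarrow> real) (k::nat) (S::nat \<Rightarrow> nat set).
       finite V \<longrightarrow> nonneg_on V f \<longrightarrow> supermodular_on V f \<longrightarrow> decomposable r V f \<longrightarrow>
       r < k \<longrightarrow> k \<le> card V - 1 \<longrightarrow> greedy_run V f k S \<longrightarrow>
       (\<forall>X. X \<subseteq> V \<longrightarrow> card X \<le> k \<longrightarrow>
          f X \<le> C * (real (card V) / real k) ^ (r - 1) * greedy_value f k S))"
proof (intro exI conjI allI impI)
  define C :: real where "C = 4 + 2 * real r ^ (r + 1)"
  show "C > 0" unfolding C_def by (simp add: add_pos_nonneg)
  fix V :: "nat set" and f :: "nat set \<Rightarrow> real" and k :: nat and S :: "nat \<Rightarrow> nat set" and X :: "nat set"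
  assume fin: "finite V" and nonneg: "nonneg_on V f" and supm: "supermodular_on V f"
    and dec: "decomposable r V f" and rk: "r < k" and kn: "k \<le> card V - 1"
    and gr: "greedy_run V f k S" and XV: "X \<subseteq> V" and Xk: "card X \<le> k"
  define n where "n = card V"
  have kn': "k < n" using kn rk unfolding n_def by linarith
  have nn: "0 \<le> f A" if "A \<subseteq> V" for A using nonneg that unfolding nonneg_on_def by blast
  have sm: "f A + f B \<le> f (A \<union> B) + f (A \<inter> B)" if "A \<subseteq> V" "B \<subseteq> V" for A B
    using supm that unfolding supermodular_on_def by blast
  have Sn: "S n = V" using gr unfolding greedy_run_def n_def by blast
  have step: "\<exists>v\<in>S i. (\<forall>u\<in>S i. marginal f v (S i - {v}) \<le> marginal f u (S i - {u})) \<and> S (i - 1) = S i - {v}"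
    if "k < i" "i \<le> n" for i
    using gr that unfolding greedy_run_def n_def by blast
  have cardS0: "S (n - d) \<subseteq> V \<and> card (S (n - d)) = n - d" if "d \<le> n - k" for d
    using that
  proof (induction d)
    case 0 then show ?case using Sn n_def by simp
  next
    case (Suc d)
    then have IH: "S (n - d) \<subseteq> V" "card (S (n - d)) = n - d" by auto
    have "k < n - d" "n - d \<le> n" using Suc.prems by auto
    then obtain v where v: "v \<in> S (n - d)" "S (n - d - 1) = S (n - d) - {v}" using step by blast
    have fS: "finite (S (n - d))" using IH(1) fin finite_subset by blast
    have e: "n - Suc d = n - d - 1" by simp
    have SS: "S (n - Suc d) = S (n - d) - {v}" unfolding e using v(2) .
    have c: "card (S (n - d) - {v}) = n - d - 1" using card_Diff_singleton[OF v(1)] IH(2) by simp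
    show ?case unfolding e v(2) using IH(1) c by blast
  qed
  have cardS: "S j \<subseteq> V" "card (S j) = j" if "k \<le> j" "j \<le> n" for j
  proof -
    have "n - (n - j) = j" using that by simp
    then show "S j \<subseteq> V" "card (S j) = j" using cardS0[of "n - j"] that by auto
  qed
  have margeq: "marginal f u (T - {u}) = f T - f (T - {u})" if "u \<in> T" for u T
    unfolding marginal_def using that by (simp add: insert_absorb)
  have chain: "(real j - real r) * f (S j) \<le> real j * f (S (j - 1))" if jj: "k < j" "j \<le> n" for j
  proof -
    obtain v where v: "v \<in> S j" "\<forall>u\<in>S j. marginal f v (S j - {v}) \<le> marginal f u (S j - {u})"
      "S (j - 1) = S j - {v}" using step[OF jj] by blast
    have SV: "S j \<subseteq> V" and cS: "card (S j) = j" using cardS jj by auto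
    have "(\<Sum>u\<in>S j. f (S j) - f (S j - {v})) \<le> (\<Sum>u\<in>S j. f (S j) - f (S j - {u}))"
      by (rule sum_mono) (use v margeq in auto)
    also have "\<dots> \<le> real r * f (S j)" by (rule marg_sum[OF fin dec SV])
    finally have "real j * (f (S j) - f (S j - {v})) \<le> real r * f (S j)" using cS by simp
    then show ?thesis using v(3) by (simp add: algebra_simps)
  qed
  define G :: "nat \<Rightarrow> real" where "G x = (\<Prod>l<r. real x - real l)" for x
  have Gk0: "0 \<le> G k" unfolding G_def by (rule prod_nonneg) (use rk in auto)
  have inv: "G k * f (S i) \<le> f (S k) * G i" if "k \<le> i" "i \<le> n" for i
    using that
  proof (induction i rule: dec_induct)
    case base then show ?case by (simp add: mult.commute)
  next
    case (step m)
    have IH: "G k * f (S m) \<le> f (S k) * G m" using step by simp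
    have ch: "(real (Suc m) - real r) * f (S (Suc m)) \<le> real (Suc m) * f (S m)"
      using chain[of "Suc m"] step by simp
    have fs: "G (Suc m) * (real (Suc m) - real r) = real (Suc m) * G m"
      unfolding G_def using ff_step[where x="real (Suc m)" and r=r] by simp
    have pos: "0 < real (Suc m) - real r" using step rk by simp
    have fk: "0 \<le> f (S k)" using nn cardS kn' by simp
    have "(G k * f (S (Suc m))) * (real (Suc m) - real r) \<le> G k * (real (Suc m) * f (S m))"
      using mult_left_mono[OF ch Gk0] by (simp add: algebra_simps)
    also have "\<dots> = real (Suc m) * (G k * f (S m))" by simp
    also have "\<dots> \<le> real (Suc m) * (f (S k) * G m)" using IH by (intro mult_left_mono) auto
    also have "\<dots> = f (S k) * (real (Suc m) * G m)" by simp
    also have "\<dots> = f (S k) * (G (Suc m) * (real (Suc m) - real r))" using fs by simp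
    also have "\<dots> = (f (S k) * G (Suc m)) * (real (Suc m) - real r)" by (simp only: mult.assoc)
    finally show ?case using pos by simp
  qed
  define gv where "gv = greedy_value f k S"
  have fk0: "0 \<le> f (S k)" using nn cardS kn' by simp
  have fe0: "0 \<le> f {}" using nn by simp
  have gvge: "f (S k) \<le> gv" "f {} \<le> gv" unfolding gv_def greedy_value_def by auto
  have gv0: "0 \<le> gv" using fe0 gvge by linarith
  have kpos: "0 < real k" using rk by simp
  have ratio1: "1 \<le> (real n / real k) ^ (r - 1)"
    using kn' kpos by (intro one_le_power) (simp add: field_simps)
  have C4: "4 \<le> C" unfolding C_def by simp
  have Cpos: "0 \<le> C" using C4 by simp
  show "f X \<le> C * (real (card V) / real k) ^ (r - 1) * greedy_value f k S"
  proof (cases "f X \<le> 0")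
    case True
    have "0 \<le> C * (real n / real k) ^ (r - 1) * gv" using Cpos gv0 ratio1 by simp
    then show ?thesis using True unfolding gv_def n_def by linarith
  next
    case False
    then have fXp: "0 < f X" by simp
    define \<tau> where "\<tau> = f X / (2 * real k)"
    have taup: "0 < \<tau>" unfolding \<tau>_def using fXp kpos by simp
    define g where "g W = f W - real (card W) * \<tau>" for W
    have finX: "finite X" using XV fin finite_subset by blast
    have finI: "finite (g ` Pow X)" using finX by simp
    have neI: "g ` Pow X \<noteq> {}" by blast
    have "Max (g ` Pow X) \<in> g ` Pow X" using Max_in[OF finI neI] .
    then obtain Z where ZX: "Z \<subseteq> X" and gZ: "g Z = Max (g ` Pow X)" by auto
    have gmax: "g W \<le> g Z" if "W \<subseteq> X" for W
      using Max_ge[OF finI] that gZ by auto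
    have ZV: "Z \<subseteq> V" using ZX XV by blast
    have finZ: "finite Z" using ZX finX finite_subset by blast
    have "g X \<le> g Z" using gmax by simp
    moreover have "real (card X) * \<tau> \<le> real k * \<tau>" using Xk taup by (simp add: mult_right_mono)
    moreover have "real k * \<tau> = f X / 2" unfolding \<tau>_def using kpos by simp
    moreover have "0 \<le> real (card Z) * \<tau>" using taup by simp
    ultimately have fZ: "f X / 2 \<le> f Z" unfolding g_def by linarith
    have margZ: "\<tau> \<le> f Z - f (Z - {v})" if "v \<in> Z" for v
    proof -
      have "g (Z - {v}) \<le> g Z" using gmax ZX by blast
      moreover have "real (card (Z - {v})) = real (card Z) - 1"
      proof -
        have c1: "card (Z - {v}) = card Z - 1" using card_Diff_singleton[OF that] .
        have "0 < card Z" using finZ that card_gt_0_iff by blast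
        then have "1 \<le> card Z" by simp
        then show ?thesis unfolding c1 by (simp add: of_nat_diff)
      qed
      ultimately show ?thesis unfolding g_def by (simp add: algebra_simps)
    qed
    show ?thesis
    proof (cases "Z \<subseteq> S k")
      case True
      have SkV: "S k \<subseteq> V" using cardS kn' by simp
      have "f Z + f (S k - Z) \<le> f (Z \<union> (S k - Z)) + f (Z \<inter> (S k - Z))"
        using sm[of Z "S k - Z"] ZV SkV by blast
      moreover have "Z \<union> (S k - Z) = S k" "Z \<inter> (S k - Z) = {}" using True by auto
      moreover have "0 \<le> f (S k - Z)" using nn SkV by blast
      ultimately have "f Z \<le> f (S k) + f {}" by simp
      then have "f X \<le> 4 * gv" using fZ gvge by linarith
      also have "\<dots> \<le> C * gv" using C4 gv0 by (simp add: mult_right_mono)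
      also have "\<dots> \<le> C * (real n / real k) ^ (r - 1) * gv"
        using ratio1 Cpos gv0 by (metis mult.right_neutral mult_left_mono mult_right_mono zero_le_mult_iff)
      finally show ?thesis unfolding gv_def n_def .
    next
      case False
      have "Z \<subseteq> S n" using Sn ZV by simp
      then obtain i where i: "k < i" "i \<le> n" "Z \<subseteq> S i" "\<not> Z \<subseteq> S (i - 1)"
        using find_switch[of "\<lambda>i. Z \<subseteq> S i" n k] False kn' by auto
      obtain v where v: "v \<in> S i" "\<forall>u\<in>S i. marginal f v (S i - {v}) \<le> marginal f u (S i - {u})"
        "S (i - 1) = S i - {v}" using step i by blast
      have SiV: "S i \<subseteq> V" and cSi: "card (S i) = i" using cardS i by auto
      have vZ: "v \<in> Z" using i(3,4) v(3) by blast
      have "f Z + f (S i - {v}) \<le> f (Z \<union> (S i - {v})) + f (Z \<inter> (S i - {v}))"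
        using sm[of Z "S i - {v}"] ZV SiV by blast
      moreover have "Z \<union> (S i - {v}) = S i" "Z \<inter> (S i - {v}) = Z - {v}" using i(3) vZ by auto
      ultimately have "f Z - f (Z - {v}) \<le> f (S i) - f (S i - {v})" by simp
      then have mv: "\<tau> \<le> f (S i) - f (S i - {v})" using margZ[OF vZ] by simp
      have "(\<Sum>u\<in>S i. \<tau>) \<le> (\<Sum>u\<in>S i. f (S i) - f (S i - {u}))"
      proof (rule sum_mono)
        fix u assume u: "u \<in> S i"
        have "marginal f v (S i - {v}) \<le> marginal f u (S i - {u})" using v u by blast
        then show "\<tau> \<le> f (S i) - f (S i - {u})" using mv margeq[OF u] margeq[OF v(1)] by simp
      qed
      also have "\<dots> \<le> real r * f (S i)" by (rule marg_sum[OF fin dec SiV])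
      finally have key: "real i * \<tau> \<le> real r * f (S i)" using cSi by simp
      have ipos: "0 < real i" using i by simp
      have r1: "1 \<le> r"
      proof (rule ccontr)
        assume "\<not> 1 \<le> r"
        then have "r = 0" by simp
        moreover have "0 < real i * \<tau>" using ipos taup by (rule mult_pos_pos)
        ultimately show False using key by simp
      qed
      have Gi: "G i \<le> real i ^ r" unfolding G_def by (rule ff_upper) (use i rk in simp)
      have Gk: "(real k / real r) ^ r \<le> G k" unfolding G_def by (rule ff_lower) (use rk r1 in auto)
      have invi: "G k * f (S i) \<le> f (S k) * G i" using inv i by simp
      have "G k * (real i * \<tau>) \<le> G k * (real r * f (S i))" using key Gk0 by (rule mult_left_mono)
      also have "\<dots> = real r * (G k * f (S i))" by simp
      also have "\<dots> \<le> real r * (f (S k) * G i)" using invi by (intro mult_left_mono) auto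
      also have "\<dots> \<le> real r * (f (S k) * real i ^ r)" using Gi fk0 by (intro mult_left_mono) auto
      also have "\<dots> = real i * (real r * f (S k) * real i ^ (r - 1))"
        using r1 by (cases r) (auto simp: algebra_simps)
      finally have A: "G k * \<tau> \<le> real r * f (S k) * real i ^ (r - 1)" using ipos by (simp add: algebra_simps)
      have "real i ^ (r - 1) \<le> real n ^ (r - 1)" using i by (intro power_mono) auto
      then have B: "G k * \<tau> \<le> real r * f (S k) * real n ^ (r - 1)"
        using A fk0 by (meson mult_left_mono of_nat_0_le_iff order_trans zero_le_mult_iff)
      have "(real k / real r) ^ r * \<tau> \<le> G k * \<tau>" using Gk taup by (simp add: mult_right_mono)
      with B have D: "(real k / real r) ^ r * \<tau> \<le> real r * f (S k) * real n ^ (r - 1)" by linarith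
      have rpos: "0 < real r" using r1 by simp
      have eq1: "(real k / real r) ^ r * \<tau> = real k ^ (r - 1) * f X / (2 * real r ^ r)"
        unfolding \<tau>_def using r1 kpos rpos
        by (cases r) (auto simp: power_divide field_simps)
      have "real k ^ (r - 1) * f X \<le> 2 * real r ^ (r + 1) * f (S k) * real n ^ (r - 1)"
      proof -
        have "real k ^ (r - 1) * f X / (2 * real r ^ r) \<le> real r * f (S k) * real n ^ (r - 1)"
          using D eq1 by simp
        then have "real k ^ (r - 1) * f X \<le> (real r * f (S k) * real n ^ (r - 1)) * (2 * real r ^ r)"
          using rpos by (simp add: divide_le_eq)
        then show ?thesis by (simp add: algebra_simps)
      qed
      then have "f X \<le> 2 * real r ^ (r + 1) * f (S k) * real n ^ (r - 1) / real k ^ (r - 1)"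
        using kpos by (simp add: le_divide_eq mult.commute)
      also have "\<dots> = 2 * real r ^ (r + 1) * (real n / real k) ^ (r - 1) * f (S k)"
        by (simp add: power_divide)
      also have "\<dots> \<le> C * (real n / real k) ^ (r - 1) * gv"
      proof (rule mult_mono)
        show "2 * real r ^ (r + 1) * (real n / real k) ^ (r - 1) \<le> C * (real n / real k) ^ (r - 1)"
          using ratio1 unfolding C_def by (intro mult_right_mono) auto
      qed (use gvge fk0 Cpos ratio1 in auto)
      finally show ?thesis unfolding gv_def n_def .
    qed
  qed
qed

end
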